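(* Let $U=(E,\mathcal{D},\rho)$ be a U-matroid with lattice of flats $\L$. Let $\mathcal{D}'\subseteq\mathcal{D}$ be an accessible distributive sublattice, and let $\L'$ be the lattice of flats of the restriction $(E,\mathcal{D}',\rho|_{\mathcal{D}'})$. Then \[\L'=\{\inf_{\mathcal{D}'}(A): A\in\L\}.\]
   Context: An accessible distributive lattice on a finite set $E$ is a family $\mathcal{D}\subseteq 2^E$ containing $\emptyset$ and $E$, closed under union and intersection, such that every nonempty $A\in\mathcal{D}$ contains some $x$ with $A\setminus\{x\}\in\mathcal{D}$. A U-matroid is a triple $(E,\mathcal{D},\rho)$ with $\rho:\mathcal{D}\to\mathbb{N}$ satisfying $\rho(\emptyset)=0$; $\rho(A)\le\rho(B)$ whenever $A\subseteq B$; $\rho(A)+\rho(B)\ge\rho(A\cup B)+\rho(A\cap B)$; and $\rho(A\cup\{e\})-\rho(A)\le1$ whenever $A,A\cup\{e\}\in\mathcal{D}$. The lattice of flats of $(E,\mathcal{D},\rho)$ is $\L=\{A\in\mathcal{D}:\rho(B)>\rho(A)\text{ for all }B\in\mathcal{D}\text{ with }B\supsetneq A\}$. For $A\subseteq E$, $\inf_{\mathcal{D}'}(A)=\bigcup\{B\in\mathcal{D}':B\subseteq A\}$. *)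

theory Defs
  imports Main
begin

definition accessible_distributive_lattice :: "'a set \<Rightarrow> 'a set set \<Rightarrow> bool" where
  "accessible_distributive_lattice E D \<longleftrightarrow>
     finite E \<and> D \<subseteq> Pow E \<and> {} \<in> D \<and> E \<in> D \<and>
     (\<forall>A\<in>D. \<forall>B\<in>D. A \<union> B \<in> D \<and> A \<inter> B \<in> D) \<and>
     (\<forall>A\<in>D. A \<noteq> {} \<longrightarrow> (\<exists>x\<in>A. A - {x} \<in> D))"

definition U_matroid :: "'a set \<Rightarrow> 'a set set \<Rightarrow> ('a set \<Rightarrow> nat) \<Rightarrow> bool" where
  "U_matroid E D \<rho> \<longleftrightarrow>
     accessible_distributive_lattice E D \<and>
     \<rho> {} = 0 \<and>
     (\<forall>A\<in>D. \<forall>B\<in>D. A \<subseteq> B \<longrightarrow> \<rho> A \<le> \<rho> B) \<and>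
     (\<forall>A\<in>D. \<forall>B\<in>D. \<rho> A + \<rho> B \<ge> \<rho> (A \<union> B) + \<rho> (A \<inter> B)) \<and>
     (\<forall>A\<in>D. \<forall>e. A \<union> {e} \<in> D \<longrightarrow> \<rho> (A \<union> {e}) \<le> \<rho> A + 1)"

definition flats :: "'a set set \<Rightarrow> ('a set \<Rightarrow> nat) \<Rightarrow> 'a set set" where
  "flats D \<rho> = {A \<in> D. \<forall>B\<in>D. A \<subset> B \<longrightarrow> \<rho> B > \<rho> A}"

definition inf_in :: "'a set set \<Rightarrow> 'a set \<Rightarrow> 'a set" where
  "inf_in D' A = \<Union>{B \<in> D'. B \<subseteq> A}"

end

theory Submission
  imports Defs
begin

lemma union_closed_finite:
  assumes "finite S" "S \<subseteq> D" "{} \<in> D" "\<forall>A\<in>D. \<forall>B\<in>D. A \<union> B \<in> D \<and> A \<inter> B \<in> D"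
  shows "\<Union>S \<in> D"
  using assms by (induction S rule: finite_induct) auto

lemma inf_in_mem:
  assumes "accessible_distributive_lattice E D'"
  shows "inf_in D' A \<in> D'"
proof -
  have f: "finite {B \<in> D'. B \<subseteq> A}"
  proof (rule finite_subset)
    show "{B \<in> D'. B \<subseteq> A} \<subseteq> Pow E" using assms unfolding accessible_distributive_lattice_def by auto
    show "finite (Pow E)" using assms unfolding accessible_distributive_lattice_def by simp
  qed
  show ?thesis unfolding inf_in_def
    apply (rule union_closed_finite[OF f])
    using assms unfolding accessible_distributive_lattice_def by auto
qed

lemma inf_in_sub: "inf_in D' A \<subseteq> A" unfolding inf_in_def by auto

lemma inf_in_ge: "X \<in> D' \<Longrightarrow> X \<subseteq> A \<Longrightarrow> X \<subseteq> inf_in D' A" unfolding inf_in_def by auto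

theorem theorem4p20:
  fixes E :: "'a set" and D D' :: "'a set set" and \<rho> :: "'a set \<Rightarrow> nat"
  assumes "U_matroid E D \<rho>"
    and "D' \<subseteq> D"
    and "accessible_distributive_lattice E D'"
  shows "flats D' \<rho> = inf_in D' ` flats D \<rho>"
proof
  have adl: "accessible_distributive_lattice E D" using assms(1) unfolding U_matroid_def by auto
  have mono: "\<And>A B. A \<in> D \<Longrightarrow> B \<in> D \<Longrightarrow> A \<subseteq> B \<Longrightarrow> \<rho> A \<le> \<rho> B"
    using assms(1) unfolding U_matroid_def by auto
  have sub: "\<And>A B. A \<in> D \<Longrightarrow> B \<in> D \<Longrightarrow> \<rho> A + \<rho> B \<ge> \<rho> (A \<union> B) + \<rho> (A \<inter> B)"
    using assms(1) unfolding U_matroid_def by auto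
  have cl: "\<And>A B. A \<in> D \<Longrightarrow> B \<in> D \<Longrightarrow> A \<union> B \<in> D \<and> A \<inter> B \<in> D"
    using adl unfolding accessible_distributive_lattice_def by auto
  have DE: "D \<subseteq> Pow E" "finite E" using adl unfolding accessible_distributive_lattice_def by auto
  show "flats D' \<rho> \<subseteq> inf_in D' ` flats D \<rho>"
  proof
    fix X assume X: "X \<in> flats D' \<rho>"
    hence XD': "X \<in> D'" and XD: "X \<in> D" using assms(2) unfolding flats_def by auto
    define S where "S = {B \<in> D. X \<subseteq> B \<and> \<rho> B = \<rho> X}"
    have "finite S"
    proof (rule finite_subset)
      show "S \<subseteq> Pow E" unfolding S_def using DE by auto
      show "finite (Pow E)" using DE by simp
    qed
    moreover have "S \<noteq> {}" using XD unfolding S_def by auto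
    ultimately obtain F where F: "F \<in> S" and Fmax: "\<forall>b\<in>S. F \<le> b \<longrightarrow> F = b"
      using finite_has_maximal by blast
    have FD: "F \<in> D" and XF: "X \<subseteq> F" and rF: "\<rho> F = \<rho> X" using F unfolding S_def by auto
    have Ffl: "F \<in> flats D \<rho>"
      unfolding flats_def
    proof (intro CollectI conjI FD ballI impI)
      fix B assume B: "B \<in> D" "F \<subset> B"
      have "\<rho> F \<le> \<rho> B" using mono[OF FD B(1)] B(2) by simp
      moreover have "\<rho> B \<noteq> \<rho> F"
      proof
        assume "\<rho> B = \<rho> F"
        hence "B \<in> S" using B XF rF unfolding S_def by auto
        thus False using Fmax B by auto
      qed
      ultimately show "\<rho> F < \<rho> B" by simp
    qed
    let ?Y = "inf_in D' F"
    have YD': "?Y \<in> D'" by (rule inf_in_mem[OF assms(3)])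
    have XY: "X \<subseteq> ?Y" by (rule inf_in_ge[OF XD' XF])
    have "\<rho> ?Y \<le> \<rho> F" using mono[OF _ FD inf_in_sub] YD' assms(2) by blast
    have "X = ?Y"
    proof (rule ccontr)
      assume "X \<noteq> ?Y"
      hence "X \<subset> ?Y" using XY by auto
      hence "\<rho> ?Y > \<rho> X" using X YD' unfolding flats_def by auto
      thus False using \<open>\<rho> ?Y \<le> \<rho> F\<close> rF by simp
    qed
    thus "X \<in> inf_in D' ` flats D \<rho>" using Ffl by blast
  qed
  show "inf_in D' ` flats D \<rho> \<subseteq> flats D' \<rho>"
  proof
    fix Y assume "Y \<in> inf_in D' ` flats D \<rho>"
    then obtain F where F: "F \<in> flats D \<rho>" and Y: "Y = inf_in D' F" by blast
    have FD: "F \<in> D" using F unfolding flats_def by auto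
    have YD': "Y \<in> D'" using Y inf_in_mem[OF assms(3)] by simp
    have YF: "Y \<subseteq> F" using Y inf_in_sub by simp
    show "Y \<in> flats D' \<rho>"
      unfolding flats_def
    proof (intro CollectI conjI YD' ballI impI)
      fix B assume B: "B \<in> D'" "Y \<subset> B"
      have BD: "B \<in> D" using B assms(2) by auto
      have "\<not> B \<subseteq> F"
      proof
        assume "B \<subseteq> F"
        hence "B \<subseteq> Y" using Y inf_in_ge[OF B(1)] by simp
        thus False using B by auto
      qed
      hence "F \<subset> B \<union> F" by auto
      hence "\<rho> (B \<union> F) > \<rho> F" using F cl[OF BD FD] unfolding flats_def by auto
      moreover have "\<rho> B + \<rho> F \<ge> \<rho> (B \<union> F) + \<rho> (B \<inter> F)" using sub BD FD by auto
      moreover have "\<rho> Y \<le> \<rho> (B \<inter> F)"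
        using mono[of Y "B \<inter> F"] YD' assms(2) cl[OF BD FD] B YF by auto
      ultimately show "\<rho> Y < \<rho> B" by linarith
    qed
  qed
qed

end
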